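(* Let $(M,d)$ be a pointed metric space, let $A\subseteq \widetilde{M}$ and let $\gamma\in(0,1]$. Then $A$ is $\gamma$-cyclically monotonic if and only if there exists $f\in B_{\mathrm{Lip}_0(M)}$ such that $f(m_{x,y})\geq \gamma$ for all $(x,y)\in A$.
   Context: $(M,d)$ is a metric space with a distinguished base point $0$. $\mathrm{Lip}_0(M)$ is the real Banach space of Lipschitz functions $f\colon M\to\mathbb{R}$ with $f(0)=0$, with norm $\|f\|=\sup\{|f(x)-f(y)|/d(x,y): x\neq y\}$; $B_{\mathrm{Lip}_0(M)}$ is its closed unit ball. $\widetilde{M}=\{(x,y)\in M\times M: x\neq y\}$. For $(x,y)\in\widetilde M$, $m_{x,y}=(\delta_x-\delta_y)/d(x,y)\in\mathrm{Lip}_0(M)^*$, where $\delta_x(f)=f(x)$; thus $f(m_{x,y})=(f(x)-f(y))/d(x,y)$. For $\gamma\in(0,1]$, a set $A\subseteq\widetilde M$ is called $\gamma$-cyclically monotonic if for every finite sequence of pairs $(x_1,y_1),\dots,(x_n,y_n)\in A$, setting $y_{n+1}=y_1$, one has $\sum_{i=1}^n \min\{d(x_i,y_{i+1})-\gamma d(x_i,y_i),\, d(y_i,y_{i+1})\}\geq 0$. *)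

theory Defs
  imports "HOL-Analysis.Analysis"
begin

text \<open>The set of pairs of distinct points of M (written M-tilde in the paper).\<close>
definition off_diag :: "'a set \<Rightarrow> ('a \<times> 'a) set" where
  "off_diag M = {(x, y). x \<in> M \<and> y \<in> M \<and> x \<noteq> y}"

text \<open>Closed unit ball of Lip_0(M) with base point z: functions vanishing at z with
  Lipschitz constant at most 1 on M (values outside M are irrelevant).\<close>
definition lip0_ball :: "'a set \<Rightarrow> ('a \<Rightarrow> 'a \<Rightarrow> real) \<Rightarrow> 'a \<Rightarrow> ('a \<Rightarrow> real) set" where
  "lip0_ball M d z = {f. f z = 0 \<and> (\<forall>x\<in>M. \<forall>y\<in>M. \<bar>f x - f y\<bar> \<le> d x y)}"

definition molecule_eval :: "('a \<Rightarrow> 'a \<Rightarrow> real) \<Rightarrow> ('a \<Rightarrow> real) \<Rightarrow> 'a \<Rightarrow> 'a \<Rightarrow> real" where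
  "molecule_eval d f x y = (f x - f y) / d x y"

text \<open>gamma-cyclic monotonicity; a finite sequence (x_1,y_1),...,(x_n,y_n) is indexed
  by 0..n-1, and y_{n+1} = y_1 becomes index (i+1) mod n.\<close>
definition gamma_cyc_mono :: "('a \<Rightarrow> 'a \<Rightarrow> real) \<Rightarrow> real \<Rightarrow> ('a \<times> 'a) set \<Rightarrow> bool" where
  "gamma_cyc_mono d \<gamma> A \<longleftrightarrow>
     (\<forall>n::nat. \<forall>p::nat \<Rightarrow> 'a \<times> 'a. n > 0 \<longrightarrow> (\<forall>i<n. p i \<in> A) \<longrightarrow>
        (\<Sum>i<n. min (d (fst (p i)) (snd (p ((i + 1) mod n))) - \<gamma> * d (fst (p i)) (snd (p i)))
                     (d (snd (p i)) (snd (p ((i + 1) mod n))))) \<ge> 0)"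

end

theory Submission
  imports Defs
begin

definition chainv :: "('a \<Rightarrow> 'a \<Rightarrow> real) \<Rightarrow> real \<Rightarrow> 'a \<Rightarrow> nat \<Rightarrow> (nat \<Rightarrow> 'a \<times> 'a) \<Rightarrow> 'a \<Rightarrow> real" where
  "chainv d g z n p u = (if n = 0 then d z u else
     d z (snd (p 0)) + (\<Sum>i<n. - g * d (fst (p i)) (snd (p i)))
     + (\<Sum>i<n-1. d (fst (p i)) (snd (p (Suc i)))) + d (fst (p (n-1))) u)"

lemma telescope_mod:
  fixes h :: "nat \<Rightarrow> real"
  assumes "n > 0"
  shows "(\<Sum>i<n. h i - h ((i + 1) mod n)) = 0"
proof -
  obtain m where n: "n = Suc m" using assms by (cases n) auto
  have "(\<Sum>i<n. h ((i + 1) mod n)) = (\<Sum>i<m. h ((i + 1) mod n)) + h 0"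
    by (simp add: n)
  also have "(\<Sum>i<m. h ((i + 1) mod n)) = (\<Sum>i<m. h (Suc i))"
    by (rule sum.cong) (auto simp: n)
  also have "(\<Sum>i<m. h (Suc i)) + h 0 = (\<Sum>i<n. h i)"
    unfolding n sum.lessThan_Suc_shift by simp
  finally show ?thesis by (simp add: sum_subtractf)
qed

lemma chain_ext:
  assumes "Metric_space M d" and "x \<in> M" and "y \<in> M"
  shows "chainv d g z (Suc n) (p(n := (x, y))) x = chainv d g z n p y - g * d x y"
proof (cases n)
  case 0
  then show ?thesis using assms by (simp add: chainv_def Metric_space.zero)
next
  case (Suc m)
  let ?q = "p(n := (x, y))"
  have s1: "(\<Sum>i<Suc n. - g * d (fst (?q i)) (snd (?q i)))
      = (\<Sum>i<n. - g * d (fst (p i)) (snd (p i))) - g * d x y"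
    by simp
  have s2: "(\<Sum>i<n. d (fst (?q i)) (snd (?q (Suc i))))
      = (\<Sum>i<m. d (fst (p i)) (snd (p (Suc i)))) + d (fst (p m)) y"
    using Suc by simp
  have dxx: "d x x = 0" using assms by (simp add: Metric_space.zero)
  show ?thesis
    unfolding chainv_def using Suc s1 s2 dxx by simp
qed

lemma chain_tri:
  assumes "Metric_space M d" and "z \<in> M" and "u \<in> M" and "v \<in> M"
    and "\<forall>i<n. p i \<in> A" and "A \<subseteq> off_diag M"
  shows "chainv d g z n p v \<le> chainv d g z n p u + d u v"
proof (cases "n = 0")
  case True
  then show ?thesis using assms by (simp add: chainv_def Metric_space.triangle)
next
  case False
  then have "p (n-1) \<in> A" using assms by auto
  then have "fst (p (n-1)) \<in> M" using assms(6) by (auto simp: off_diag_def)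
  then have "d (fst (p (n-1))) v \<le> d (fst (p (n-1))) u + d u v"
    using assms by (simp add: Metric_space.triangle)
  then show ?thesis using False by (simp add: chainv_def)
qed

lemma chain_cycle:
  assumes "Metric_space M d" and "z \<in> M"
    and "\<forall>i<n. p i \<in> A" and "A \<subseteq> off_diag M" and "gamma_cyc_mono d g A"
  shows "chainv d g z n p z \<ge> 0"
proof (cases n)
  case 0
  then show ?thesis using assms by (simp add: chainv_def Metric_space.nonneg)
next
  case (Suc m)
  have inM: "fst (p i) \<in> M" "snd (p i) \<in> M" if "i < n" for i
    using assms(3,4) that by (auto simp: off_diag_def)
  have "0 \<le> (\<Sum>i<n. min (d (fst (p i)) (snd (p ((i + 1) mod n))) - g * d (fst (p i)) (snd (p i)))
                     (d (snd (p i)) (snd (p ((i + 1) mod n)))))"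
  proof -
    have "n > 0 \<longrightarrow> (\<forall>i<n. p i \<in> A) \<longrightarrow> 0 \<le> (\<Sum>i<n. min (d (fst (p i)) (snd (p ((i + 1) mod n))) - g * d (fst (p i)) (snd (p i)))
                     (d (snd (p i)) (snd (p ((i + 1) mod n)))))"
      using assms(5) unfolding gamma_cyc_mono_def by blast
    then show ?thesis using Suc assms(3) by blast
  qed
  also have "\<dots> \<le> (\<Sum>i<n. d (fst (p i)) (snd (p ((i + 1) mod n))) - g * d (fst (p i)) (snd (p i)))"
    by (rule sum_mono) simp
  also have "\<dots> = (\<Sum>i<n. d (fst (p i)) (snd (p ((i + 1) mod n)))) + (\<Sum>i<n. - g * d (fst (p i)) (snd (p i)))"
    by (simp add: sum_subtractf sum_negf)
  also have "(\<Sum>i<n. d (fst (p i)) (snd (p ((i + 1) mod n))))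
      = (\<Sum>i<m. d (fst (p i)) (snd (p ((i + 1) mod n)))) + d (fst (p m)) (snd (p 0))"
    using Suc by simp
  also have "(\<Sum>i<m. d (fst (p i)) (snd (p ((i + 1) mod n)))) = (\<Sum>i<m. d (fst (p i)) (snd (p (Suc i))))"
    by (rule sum.cong) (auto simp: Suc)
  also have "d (fst (p m)) (snd (p 0)) \<le> d (fst (p m)) z + d z (snd (p 0))"
    using inM[of m] inM[of 0] assms(1,2) Suc by (simp add: Metric_space.triangle)
  finally show ?thesis using Suc by (simp add: chainv_def)
qed

theorem proposition2p2:
  fixes M :: "'a set" and d :: "'a \<Rightarrow> 'a \<Rightarrow> real" and z :: 'a
    and A :: "('a \<times> 'a) set" and \<gamma> :: real
  assumes "Metric_space M d" and "z \<in> M"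
    and "A \<subseteq> off_diag M"
    and "0 < \<gamma>" and "\<gamma> \<le> 1"
  shows "gamma_cyc_mono d \<gamma> A \<longleftrightarrow>
         (\<exists>f \<in> lip0_ball M d z. \<forall>(x, y) \<in> A. molecule_eval d f x y \<ge> \<gamma>)"
proof
  assume cyc: "gamma_cyc_mono d \<gamma> A"
  define C where "C u = {chainv d \<gamma> z n p u | n p. \<forall>i<n. p i \<in> A}" for u
  define h where "h u = Inf (C u)" for u
  have C0: "d z u \<in> C u" for u
    unfolding C_def by (rule CollectI, rule exI[of _ 0]) (auto simp: chainv_def)
  have Clow: "- d u z \<le> c" if uM: "u \<in> M" and cC: "c \<in> C u" for u c
  proof -
    obtain n p where c: "c = chainv d \<gamma> z n p u" and p: "\<forall>i<n. p i \<in> A"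
      using cC unfolding C_def by auto
    have "chainv d \<gamma> z n p z \<le> chainv d \<gamma> z n p u + d u z"
      by (rule chain_tri[OF assms(1,2) uM assms(2) p assms(3)])
    moreover have "chainv d \<gamma> z n p z \<ge> 0"
      by (rule chain_cycle[OF assms(1,2) p assms(3) cyc])
    ultimately show ?thesis using c by simp
  qed
  have bdd: "bdd_below (C u)" if "u \<in> M" for u
    using Clow[OF that] by (auto simp: bdd_below_def)
  have hle: "h u \<le> c" if "u \<in> M" "c \<in> C u" for u c
    unfolding h_def using bdd[OF that(1)] that(2) by (rule cInf_lower[rotated])
  have hge: "c \<le> h u" if "\<And>c'. c' \<in> C u \<Longrightarrow> c \<le> c'" for u c
    unfolding h_def using C0 that by (intro cInf_greatest) auto
  have lip: "h v \<le> h u + d u v" if "u \<in> M" "v \<in> M" for u v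
  proof -
    have "h v - d u v \<le> h u"
    proof (rule hge)
      fix c assume "c \<in> C u"
      then obtain n p where c: "c = chainv d \<gamma> z n p u" and p: "\<forall>i<n. p i \<in> A"
        unfolding C_def by auto
      have "chainv d \<gamma> z n p v \<le> chainv d \<gamma> z n p u + d u v"
        by (rule chain_tri[OF assms(1,2) that p assms(3)])
      moreover have "h v \<le> chainv d \<gamma> z n p v"
        using p that by (intro hle) (auto simp: C_def)
      ultimately show "h v - d u v \<le> c" using c by simp
    qed
    then show ?thesis by simp
  qed
  have hA: "h x + \<gamma> * d x y \<le> h y" if "(x, y) \<in> A" for x y
  proof -
    have xy: "x \<in> M" "y \<in> M" using that assms(3) by (auto simp: off_diag_def)
    have "h x + \<gamma> * d x y \<le> h y"
    proof -
      have "h x \<le> h y - \<gamma> * d x y"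
      proof -
        have "h x + \<gamma> * d x y \<le> h y"
        proof -
          have "h x \<le> c - \<gamma> * d x y" if cC: "c \<in> C y" for c
          proof -
            obtain n p where c: "c = chainv d \<gamma> z n p y" and p: "\<forall>i<n. p i \<in> A"
              using cC unfolding C_def by auto
            have "chainv d \<gamma> z (Suc n) (p(n := (x, y))) x \<in> C x"
              unfolding C_def using p \<open>(x, y) \<in> A\<close> by (intro CollectI exI[of _ "Suc n"] exI[of _ "p(n := (x, y))"]) auto
            then have "h x \<le> chainv d \<gamma> z (Suc n) (p(n := (x, y))) x" using xy by (intro hle) auto
            also have "\<dots> = c - \<gamma> * d x y" using chain_ext[OF assms(1) xy] c by simp
            finally show ?thesis .
          qed
          then have "h x + \<gamma> * d x y \<le> h y" using hge[of y "h x + \<gamma> * d x y"] by fastforce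
          then show ?thesis .
        qed
        then show ?thesis by simp
      qed
      then show ?thesis by simp
    qed
    then show ?thesis .
  qed
  have hz: "h z = 0"
  proof -
    have "h z \<le> 0" using hle[OF assms(2) C0[of z]] Metric_space.zero[OF assms(1) assms(2) assms(2)] by simp
    moreover have "0 \<le> h z" using hge[of z 0] Clow[OF assms(2)] Metric_space.zero[OF assms(1) assms(2) assms(2)] by simp
    ultimately show ?thesis by simp
  qed
  define f where "f u = - h u" for u
  have "f \<in> lip0_ball M d z"
    unfolding lip0_ball_def f_def
  proof (intro CollectI conjI ballI)
    show "- h z = 0" using hz by simp
    fix x y assume "x \<in> M" "y \<in> M"
    then show "\<bar>- h x - - h y\<bar> \<le> d x y"
      using lip[of x y] lip[of y x] Metric_space.commute[OF assms(1), of x y] by auto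
  qed
  moreover have "\<forall>(x, y) \<in> A. molecule_eval d f x y \<ge> \<gamma>"
  proof (intro ballI, clarify)
    fix x y assume xy: "(x, y) \<in> A"
    then have "x \<in> M" "y \<in> M" "x \<noteq> y" using assms(3) by (auto simp: off_diag_def)
    then have pos: "d x y > 0" using assms(1) Metric_space.nonneg[OF assms(1), of x y]
      by (metis Metric_space.zero less_eq_real_def)
    have "\<gamma> * d x y \<le> f x - f y" using hA[OF xy] by (simp add: f_def)
    then show "\<gamma> \<le> molecule_eval d f x y" using pos by (simp add: molecule_eval_def pos_le_divide_eq)
  qed
  ultimately show "\<exists>f \<in> lip0_ball M d z. \<forall>(x, y) \<in> A. molecule_eval d f x y \<ge> \<gamma>" by blast
next
  assume "\<exists>f \<in> lip0_ball M d z. \<forall>(x, y) \<in> A. molecule_eval d f x y \<ge> \<gamma>"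
  then obtain f where f: "f \<in> lip0_ball M d z" and fA: "\<forall>(x, y) \<in> A. molecule_eval d f x y \<ge> \<gamma>" by blast
  have L: "f x - f y \<le> d x y" if "x \<in> M" "y \<in> M" for x y
    using f that unfolding lip0_ball_def by fastforce
  have G: "\<gamma> * d x y \<le> f x - f y" if "(x, y) \<in> A" for x y
  proof -
    have "x \<in> M" "y \<in> M" "x \<noteq> y" using that assms(3) by (auto simp: off_diag_def)
    then have pos: "d x y > 0" using Metric_space.nonneg[OF assms(1), of x y]
      by (metis Metric_space.zero[OF assms(1)] less_eq_real_def)
    have "\<gamma> \<le> (f x - f y) / d x y" using fA that by (auto simp: molecule_eval_def)
    then show ?thesis using pos by (simp add: pos_le_divide_eq mult.commute)
  qed
  show "gamma_cyc_mono d \<gamma> A"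
    unfolding gamma_cyc_mono_def
  proof (intro allI impI)
    fix n :: nat and p :: "nat \<Rightarrow> 'a \<times> 'a"
    assume n: "n > 0" and p: "\<forall>i<n. p i \<in> A"
    let ?h = "\<lambda>i. f (snd (p i))"
    have "(\<Sum>i<n. ?h i - ?h ((i + 1) mod n)) \<le>
      (\<Sum>i<n. min (d (fst (p i)) (snd (p ((i + 1) mod n))) - \<gamma> * d (fst (p i)) (snd (p i)))
                     (d (snd (p i)) (snd (p ((i + 1) mod n)))))"
    proof (rule sum_mono)
      fix i assume "i \<in> {..<n}"
      then have i: "i < n" "(i + 1) mod n < n" using n by auto
      then have pi: "p i \<in> A" "p ((i + 1) mod n) \<in> A" using p by auto
      then have M: "fst (p i) \<in> M" "snd (p i) \<in> M" "snd (p ((i + 1) mod n)) \<in> M"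
        using assms(3) by (auto simp: off_diag_def)
      have g: "\<gamma> * d (fst (p i)) (snd (p i)) \<le> f (fst (p i)) - f (snd (p i))"
        using G[of "fst (p i)" "snd (p i)"] pi by simp
      show "?h i - ?h ((i + 1) mod n) \<le> min (d (fst (p i)) (snd (p ((i + 1) mod n))) - \<gamma> * d (fst (p i)) (snd (p i)))
                     (d (snd (p i)) (snd (p ((i + 1) mod n))))"
        using L[OF M(1) M(3)] L[OF M(2) M(3)] g by simp
    qed
    then show "0 \<le> (\<Sum>i<n. min (d (fst (p i)) (snd (p ((i + 1) mod n))) - \<gamma> * d (fst (p i)) (snd (p i)))
                     (d (snd (p i)) (snd (p ((i + 1) mod n)))))"
      using telescope_mod[OF n, of ?h] by simp
  qed
qed

end
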